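(* Let $\mathcal{A}=(Q,\Sigma,\delta)$ be a strongly connected DFA with $n$ states, let $P$ be a positive probability distribution on $\Sigma$, and let $\alpha$ be a stationary distribution of the Markov chain of $\mathcal{A}$ under $P$, i.e. a stochastic vector with $\alpha\sum_{a\in\Sigma}P(a)[a]=\alpha$. Then $\mathcal{A}$ is synchronizing if and only if there exists a set of words $W\subseteq\Sigma^*$ which is complete for $\mathbb{R}^n$ with respect to $\alpha$.
   Context: A DFA $\mathcal{A}=(Q,\Sigma,\delta)$ has a finite state set $Q=\{1,\dots,n\}$, finite alphabet $\Sigma$ and total transition function, extended to words; $q.w=\delta(q,w)$. It is synchronizing if some word $w$ satisfies $|Q.w|=1$. It is strongly connected if every state is reachable from every state. Vectors are row vectors; $[q]\in\mathbb{R}^n$ is the standard basis vector of state $q$; for a word $w$, $[w]$ is the $n\times n$ 0-1 matrix with $[w]_{p,q}=1$ iff $p.w=q$. A stochastic vector is a non-negative vector whose entries sum to $1$. A set of words $W$ is complete for a subspace $V\le\mathbb{R}^n$ with respect to $g\in V$ if $\langle g[w]\mid w\in W\rangle=V$. *)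

theory Defs
  imports "HOL-Analysis.Analysis"
begin

definition delta_word :: "('q \<Rightarrow> 'a \<Rightarrow> 'q) \<Rightarrow> 'q \<Rightarrow> 'a list \<Rightarrow> 'q" where
  "delta_word \<delta> q w = foldl \<delta> q w"

definition strongly_connected :: "('q \<Rightarrow> 'a \<Rightarrow> 'q) \<Rightarrow> bool" where
  "strongly_connected \<delta> \<longleftrightarrow> (\<forall>p q. \<exists>w. delta_word \<delta> p w = q)"

definition synchronizing :: "('q \<Rightarrow> 'a \<Rightarrow> 'q) \<Rightarrow> bool" where
  "synchronizing \<delta> \<longleftrightarrow> (\<exists>w. card ((\<lambda>q. delta_word \<delta> q w) ` UNIV) = 1)"

definition word_matrix :: "('q::finite \<Rightarrow> 'a \<Rightarrow> 'q) \<Rightarrow> 'a list \<Rightarrow> real^'q^'q" where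
  "word_matrix \<delta> w = (\<chi> p q. if delta_word \<delta> p w = q then 1 else 0)"

definition stochastic_vector :: "real^'q::finite \<Rightarrow> bool" where
  "stochastic_vector v \<longleftrightarrow> (\<forall>q. v $ q \<ge> 0) \<and> (\<Sum>q\<in>UNIV. v $ q) = 1"

definition complete_for :: "('q::finite \<Rightarrow> 'a \<Rightarrow> 'q) \<Rightarrow> 'a list set \<Rightarrow> (real^'q) set \<Rightarrow> real^'q \<Rightarrow> bool" where
  "complete_for \<delta> W V g \<longleftrightarrow> span {g v* word_matrix \<delta> w | w. w \<in> W} = V"

end

theory Submission
  imports Defs
begin

lemma dw_append: "delta_word \<delta> p (u @ v) = delta_word \<delta> (delta_word \<delta> p u) v"
  by (simp add: delta_word_def)

lemma dw_Cons: "delta_word \<delta> p (a # w) = delta_word \<delta> (\<delta> p a) w"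
  by (simp add: delta_word_def)

lemma dw_Nil: "delta_word \<delta> p [] = p"
  by (simp add: delta_word_def)

lemma word_matrix_mult:
  fixes \<delta> :: "'q::finite \<Rightarrow> 'a \<Rightarrow> 'q"
  shows "word_matrix \<delta> u ** word_matrix \<delta> v = word_matrix \<delta> (u @ v)"
proof -
  have "(\<Sum>k\<in>UNIV. (if delta_word \<delta> p u = k then 1 else 0) * (if delta_word \<delta> k v = q then 1 else (0::real)))
        = (if delta_word \<delta> (delta_word \<delta> p u) v = q then 1 else 0)" for p q
  proof -
    have "(\<Sum>k\<in>UNIV. (if delta_word \<delta> p u = k then 1 else 0) * (if delta_word \<delta> k v = q then 1 else (0::real)))
        = (\<Sum>k\<in>UNIV. if k = delta_word \<delta> p u then (if delta_word \<delta> k v = q then 1 else (0::real)) else 0)"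
      by (rule sum.cong) auto
    also have "\<dots> = (if delta_word \<delta> (delta_word \<delta> p u) v = q then 1 else 0)"
      by (subst sum.delta) auto
    finally show ?thesis .
  qed
  then show ?thesis
    by (simp add: word_matrix_def matrix_matrix_mult_def dw_append vec_eq_iff)
qed

lemma vm_component:
  fixes \<delta> :: "'q::finite \<Rightarrow> 'a \<Rightarrow> 'q"
  shows "(x v* word_matrix \<delta> w) $ q = (\<Sum>p\<in>{p. delta_word \<delta> p w = q}. x $ p)"
proof -
  have "(x v* word_matrix \<delta> w) $ q = (\<Sum>p\<in>UNIV. (if delta_word \<delta> p w = q then 1 else 0) * x $ p)"
    by (simp add: vector_matrix_mult_def word_matrix_def mult.commute)
  also have "\<dots> = (\<Sum>p\<in>UNIV. if delta_word \<delta> p w = q then x $ p else 0)"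
    by (rule sum.cong) auto
  also have "\<dots> = (\<Sum>p\<in>{p. delta_word \<delta> p w = q}. x $ p)"
    by (simp add: sum.If_cases)
  finally show ?thesis .
qed

lemma vm_sum_scale:
  fixes A :: "'a::finite \<Rightarrow> real^'q::finite^'q"
  shows "x v* (\<Sum>a\<in>UNIV. P a *\<^sub>R A a) = (\<Sum>a\<in>UNIV. P a *\<^sub>R (x v* A a))"
proof -
  have "(x v* (\<Sum>a\<in>UNIV. P a *\<^sub>R A a)) $ j = (\<Sum>a\<in>UNIV. P a *\<^sub>R (x v* A a)) $ j" for j
  proof -
    have "(x v* (\<Sum>a\<in>UNIV. P a *\<^sub>R A a)) $ j = (\<Sum>i\<in>UNIV. (\<Sum>a\<in>UNIV. P a * A a $ i $ j) * x $ i)"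
      by (simp add: vector_matrix_mult_def sum_component mult.commute)
    also have "\<dots> = (\<Sum>i\<in>UNIV. \<Sum>a\<in>UNIV. P a * (A a $ i $ j * x $ i))"
      by (simp add: sum_distrib_right mult.assoc)
    also have "\<dots> = (\<Sum>a\<in>UNIV. \<Sum>i\<in>UNIV. P a * (A a $ i $ j * x $ i))"
      by (rule sum.swap)
    also have "\<dots> = (\<Sum>a\<in>UNIV. P a *\<^sub>R (x v* A a)) $ j"
      by (simp add: vector_matrix_mult_def sum_component sum_distrib_left mult.commute)
    finally show ?thesis .
  qed
  then show ?thesis by (simp add: vec_eq_iff)
qed

lemma avg_eq_max:
  fixes P x :: "'a::finite \<Rightarrow> real"
  assumes "\<forall>a. P a > 0" "(\<Sum>a\<in>UNIV. P a) = 1" "\<forall>a. x a \<le> m" "(\<Sum>a\<in>UNIV. P a * x a) = m"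
  shows "x a = m"
proof -
  have "(\<Sum>a\<in>UNIV. P a * (m - x a)) = 0"
    using assms(2,4) by (simp add: algebra_simps sum_subtractf sum_distrib_left[symmetric])
  moreover have "\<forall>a\<in>UNIV. P a * (m - x a) \<ge> 0" using assms(1,3)
    by (simp add: less_imp_le)
  ultimately have "\<forall>a\<in>UNIV. P a * (m - x a) = 0"
    using sum_nonneg_eq_0_iff[of UNIV "\<lambda>a. P a * (m - x a)"] by simp
  then show ?thesis using assms(1) by (metis UNIV_I eq_iff_diff_eq_0 mult_eq_0_iff order_less_irrefl)
qed


lemma sum_scale_vm:
  fixes y :: "'a::finite \<Rightarrow> real^'q::finite"
  shows "(\<Sum>a\<in>UNIV. P a *\<^sub>R y a) v* B = (\<Sum>a\<in>UNIV. P a *\<^sub>R (y a v* B))"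
proof -
  have "((\<Sum>a\<in>UNIV. P a *\<^sub>R y a) v* B) $ j = (\<Sum>a\<in>UNIV. P a *\<^sub>R (y a v* B)) $ j" for j
  proof -
    have "((\<Sum>a\<in>UNIV. P a *\<^sub>R y a) v* B) $ j = (\<Sum>i\<in>UNIV. B $ i $ j * (\<Sum>a\<in>UNIV. P a * y a $ i))"
      by (simp add: vector_matrix_mult_def sum_component mult.commute)
    also have "\<dots> = (\<Sum>i\<in>UNIV. \<Sum>a\<in>UNIV. P a * (B $ i $ j * y a $ i))"
      by (simp add: sum_distrib_left mult.assoc mult.left_commute)
    also have "\<dots> = (\<Sum>a\<in>UNIV. \<Sum>i\<in>UNIV. P a * (B $ i $ j * y a $ i))"
      by (rule sum.swap)
    also have "\<dots> = (\<Sum>a\<in>UNIV. P a *\<^sub>R (y a v* B)) $ j"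
      by (simp add: vector_matrix_mult_def sum_component sum_distrib_left mult.commute)
    finally show ?thesis .
  qed
  then show ?thesis by (simp add: vec_eq_iff)
qed

lemma linear_vm: "linear (\<lambda>x::real^'n::finite. x v* (A::real^'m::finite^'n))"
proof (rule linearI)
  show "(x + y) v* A = x v* A + y v* A" for x y
    by (simp add: vector_matrix_left_distrib)
  show "(c *\<^sub>R x) v* A = c *\<^sub>R (x v* A)" for c x
    by (simp add: vec_eq_iff vector_matrix_mult_def sum_distrib_left mult.assoc mult.left_commute)
qed

lemma rank_app1:
  fixes \<delta> :: "'q::finite \<Rightarrow> 'a \<Rightarrow> 'q"
  shows "card (range (\<lambda>p. delta_word \<delta> p (u @ v))) \<le> card (range (\<lambda>p. delta_word \<delta> p u))"
proof -
  have "range (\<lambda>p. delta_word \<delta> p (u @ v)) = (\<lambda>x. delta_word \<delta> x v) ` range (\<lambda>p. delta_word \<delta> p u)"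
    by (auto simp: dw_append)
  then show ?thesis by (simp add: card_image_le)
qed

lemma range_app2:
  "range (\<lambda>p. delta_word \<delta> p (u @ v)) \<subseteq> range (\<lambda>p. delta_word \<delta> p v)"
  by (auto simp: dw_append)

lemma rank_app2:
  fixes \<delta> :: "'q::finite \<Rightarrow> 'a \<Rightarrow> 'q"
  shows "card (range (\<lambda>p. delta_word \<delta> p (u @ v))) \<le> card (range (\<lambda>p. delta_word \<delta> p v))"
  by (rule card_mono[OF _ range_app2]) simp

lemma total_weight:
  fixes \<delta> :: "'q::finite \<Rightarrow> 'a \<Rightarrow> 'q"
  shows "(\<Sum>q\<in>UNIV. (x v* word_matrix \<delta> w) $ q) = (\<Sum>p\<in>UNIV. x $ p)"
proof -
  have "(\<Sum>q\<in>UNIV. (x v* word_matrix \<delta> w) $ q) = (\<Sum>q\<in>UNIV. \<Sum>p\<in>UNIV. if delta_word \<delta> p w = q then x $ p else 0)"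
    by (simp add: vm_component sum.If_cases)
  also have "\<dots> = (\<Sum>p\<in>UNIV. \<Sum>q\<in>UNIV. if delta_word \<delta> p w = q then x $ p else 0)"
    by (rule sum.swap)
  also have "\<dots> = (\<Sum>p\<in>UNIV. x $ p)"
    by simp
  finally show ?thesis .
qed

theorem mainTheorem2:
  fixes \<delta> :: "'q::finite \<Rightarrow> 'a::finite \<Rightarrow> 'q"
    and P :: "'a \<Rightarrow> real"
    and \<alpha> :: "real^'q"
  assumes "strongly_connected \<delta>"
    and "\<forall>a. P a > 0" and "(\<Sum>a\<in>UNIV. P a) = 1"
    and "stochastic_vector \<alpha>"
    and "\<alpha> v* (\<Sum>a\<in>UNIV. P a *\<^sub>R word_matrix \<delta> [a]) = \<alpha>"
  shows "synchronizing \<delta> \<longleftrightarrow> (\<exists>W. complete_for \<delta> W UNIV \<alpha>)"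
proof
  assume "synchronizing \<delta>"
  then obtain w0 where "card (range (\<lambda>q. delta_word \<delta> q w0)) = 1"
    unfolding synchronizing_def by blast
  then obtain s where s: "range (\<lambda>q. delta_word \<delta> q w0) = {s}"
    by (meson card_1_singletonE)
  have ax: "axis q 1 \<in> span {\<alpha> v* word_matrix \<delta> w | w. w \<in> UNIV}" for q
  proof -
    obtain u where u: "delta_word \<delta> s u = q"
      using assms(1) unfolding strongly_connected_def by blast
    have all: "delta_word \<delta> p (w0 @ u) = q" for p
      using s u by (auto simp: dw_append)
    have "\<alpha> v* word_matrix \<delta> (w0 @ u) = axis q 1"
    proof (subst vec_eq_iff, intro allI)
      fix j
      show "(\<alpha> v* word_matrix \<delta> (w0 @ u)) $ j = axis q 1 $ j"
      proof (cases "j = q")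
        case True
        then show ?thesis using all assms(4)
          by (simp add: vm_component axis_def stochastic_vector_def)
      next
        case False
        then show ?thesis using all by (simp add: vm_component axis_def)
      qed
    qed
    then show ?thesis by (metis (mono_tags, lifting) UNIV_I mem_Collect_eq span_base)
  qed
  have "x \<in> span {\<alpha> v* word_matrix \<delta> w | w. w \<in> UNIV}" for x
  proof -
    have "x = (\<Sum>i\<in>UNIV. (x$i) *\<^sub>R axis i 1)"
      using basis_expansion[of x] by (simp add: scalar_mult_eq_scaleR)
    also have "\<dots> \<in> span {\<alpha> v* word_matrix \<delta> w | w. w \<in> UNIV}"
      by (intro span_sum span_scale ax)
    finally show ?thesis .
  qed
  then show "\<exists>W. complete_for \<delta> W UNIV \<alpha>"
    unfolding complete_for_def by blast
next
  assume "\<exists>W. complete_for \<delta> W UNIV \<alpha>"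
  then obtain W where W: "span {\<alpha> v* word_matrix \<delta> w | w. w \<in> W} = UNIV"
    unfolding complete_for_def by blast
  define rk where "rk w = card (range (\<lambda>p. delta_word \<delta> p w))" for w
  define wt where "wt w q = (\<alpha> v* word_matrix \<delta> w) $ q" for w q
  obtain z where zmin: "\<forall>y. rk z \<le> rk y"
    using ex_has_least_nat[of "\<lambda>_. True" "[]" rk] by blast
  define r where "r = rk z"
  have rk_ge: "r \<le> rk y" for y using zmin r_def by simp
  have rk_pre: "rk w = r \<Longrightarrow> rk (u @ w) = r" for u w
    using rank_app2[of \<delta> u w] rk_ge[of "u @ w"] unfolding rk_def by simp
  have rk_suf: "rk w = r \<Longrightarrow> rk (w @ u) = r" for u w
    using rank_app1[of \<delta> w u] rk_ge[of "w @ u"] unfolding rk_def by simp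
  define Wt where "Wt = {wt w q | w q. rk w = r}"
  have "Wt \<subseteq> (\<lambda>A. \<Sum>p\<in>A. \<alpha> $ p) ` UNIV"
    unfolding Wt_def wt_def by (auto simp: vm_component)
  then have finWt: "finite Wt" by (rule finite_subset) simp
  have "wt z q \<in> Wt" for q unfolding Wt_def r_def by blast
  then have neWt: "Wt \<noteq> {}" by blast
  define m where "m = Max Wt"
  have le_m: "rk w = r \<Longrightarrow> wt w q \<le> m" for w q
    unfolding m_def by (rule Max_ge[OF finWt]) (auto simp: Wt_def)
  have "m \<in> Wt" unfolding m_def by (rule Max_in[OF finWt neWt])
  then obtain w0 q0 where w0: "rk w0 = r" and q0: "wt w0 q0 = m"
    unfolding Wt_def by auto
  have wt_nonneg: "wt w q \<ge> 0" for w q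
    using assms(4) unfolding wt_def stochastic_vector_def by (simp add: vm_component sum_nonneg)
  have tot: "(\<Sum>q\<in>UNIV. wt w q) = 1" for w
    using assms(4) unfolding wt_def stochastic_vector_def by (simp add: total_weight)
  have stat: "wt w q = (\<Sum>a\<in>UNIV. P a * wt (a # w) q)" for w q
  proof -
    have "\<alpha> v* word_matrix \<delta> w = (\<alpha> v* (\<Sum>a\<in>UNIV. P a *\<^sub>R word_matrix \<delta> [a])) v* word_matrix \<delta> w"
      using assms(5) by simp
    also have "\<dots> = (\<Sum>a\<in>UNIV. P a *\<^sub>R (\<alpha> v* word_matrix \<delta> [a])) v* word_matrix \<delta> w"
      by (simp add: vm_sum_scale)
    also have "\<dots> = (\<Sum>a\<in>UNIV. P a *\<^sub>R ((\<alpha> v* word_matrix \<delta> [a]) v* word_matrix \<delta> w))"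
      by (simp add: sum_scale_vm)
    also have "\<dots> = (\<Sum>a\<in>UNIV. P a *\<^sub>R (\<alpha> v* word_matrix \<delta> (a # w)))"
      by (simp add: vector_matrix_mul_assoc word_matrix_mult)
    finally show ?thesis unfolding wt_def by (simp add: sum_component)
  qed
  have claimA: "wt (u @ w0) q0 = m" for u
  proof (induction u)
    case Nil then show ?case using q0 by simp
  next
    case (Cons a u)
    have "\<forall>b. wt (b # u @ w0) q0 \<le> m"
      using le_m rk_pre[OF w0, of "_ # u"] by simp
    moreover have "(\<Sum>b\<in>UNIV. P b * wt (b # u @ w0) q0) = m"
      using stat[of "u @ w0" q0] Cons by simp
    ultimately show ?case
      using avg_eq_max[OF assms(2,3), of "\<lambda>b. wt (b # u @ w0) q0" m a] by simp
  qed
  have "\<exists>p0. delta_word \<delta> p0 w0 = q0"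
  proof (rule ccontr)
    assume "\<nexists>p0. delta_word \<delta> p0 w0 = q0"
    then have "{p. delta_word \<delta> p w0 = q0} = {}" by blast
    then have "m = 0" using q0 unfolding wt_def by (simp add: vm_component)
    then have "wt w0 q = 0" for q using le_m[OF w0, of q] wt_nonneg[of w0 q] by simp
    then show False using tot[of w0] by simp
  qed
  then obtain p0 where p0: "delta_word \<delta> p0 w0 = q0" by blast
  have claimB: "wt z' s = m" if z': "rk z' = r" and s: "s \<in> range (\<lambda>p. delta_word \<delta> p z')" for z' s
  proof -
    obtain v where v: "delta_word \<delta> s v = p0"
      using assms(1) unfolding strongly_connected_def by blast
    define f where "f x = delta_word \<delta> x (v @ w0)" for x
    have img: "range (\<lambda>p. delta_word \<delta> p (z' @ v @ w0)) = f ` range (\<lambda>p. delta_word \<delta> p z')"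
      unfolding f_def by (auto simp: dw_append)
    have "rk (z' @ v @ w0) = r" using rk_suf[OF z'] by simp
    then have "card (f ` range (\<lambda>p. delta_word \<delta> p z')) = card (range (\<lambda>p. delta_word \<delta> p z'))"
      using z' img unfolding rk_def by simp
    then have inj: "inj_on f (range (\<lambda>p. delta_word \<delta> p z'))"
      by (simp add: eq_card_imp_inj_on)
    have fs: "f s = q0" unfolding f_def using v p0 by (simp add: dw_append)
    have "{p. delta_word \<delta> p (z' @ v @ w0) = q0} = {p. delta_word \<delta> p z' = s}"
    proof (intro set_eqI iffI; simp)
      fix p assume "delta_word \<delta> p (z' @ v @ w0) = q0"
      then have "f (delta_word \<delta> p z') = f s" using fs unfolding f_def by (simp add: dw_append)
      then show "delta_word \<delta> p z' = s" using inj s by (auto dest: inj_onD)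
    next
      fix p assume "delta_word \<delta> p z' = s"
      then show "delta_word \<delta> p (z' @ v @ w0) = q0" using fs unfolding f_def by (simp add: dw_append)
    qed
    then have "wt z' s = wt (z' @ v @ w0) q0" unfolding wt_def by (simp add: vm_component)
    also have "\<dots> = m" using claimA[of "z' @ v"] by simp
    finally show ?thesis .
  qed
  define S where "S = range (\<lambda>p. delta_word \<delta> p z)"
  define c where "c = \<alpha> v* word_matrix \<delta> z"
  have const: "(\<alpha> v* word_matrix \<delta> w) v* word_matrix \<delta> z = c" for w
  proof (subst vec_eq_iff, intro allI)
    fix s
    have rwz: "rk (w @ z) = r" using rk_pre[of z w] r_def by simp
    have rng: "range (\<lambda>p. delta_word \<delta> p (w @ z)) = S"
      unfolding S_def
      by (rule card_subset_eq[OF _ range_app2]) (use rwz r_def in \<open>simp_all add: rk_def\<close>)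
    show "((\<alpha> v* word_matrix \<delta> w) v* word_matrix \<delta> z) $ s = c $ s"
    proof (cases "s \<in> S")
      case True
      then show ?thesis using claimB[OF rwz, of s] claimB[of z s] rng r_def unfolding c_def S_def wt_def
        by (simp add: vector_matrix_mul_assoc word_matrix_mult)
    next
      case False
      then have "{p. delta_word \<delta> p (w @ z) = s} = {}" "{p. delta_word \<delta> p z = s} = {}"
        using rng S_def by auto
      then show ?thesis unfolding c_def
        by (simp add: vector_matrix_mul_assoc word_matrix_mult vm_component)
    qed
  qed
  have cS: "c $ s = m" if "s \<in> S" for s
    using claimB[of z s] that r_def unfolding c_def wt_def S_def by simp
  have inspan: "\<exists>k. axis s 1 = k *\<^sub>R c" if sS: "s \<in> S" for s
  proof -
    obtain p where p: "delta_word \<delta> p z = s" using sS S_def by auto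
    have e: "axis p 1 v* word_matrix \<delta> z = axis s 1"
    proof (subst vec_eq_iff, intro allI)
      fix j
      have "{p'. delta_word \<delta> p' z = j} \<inter> {p} = (if s = j then {p} else {})" using p by auto
      then have "(\<Sum>p'\<in>{p'. delta_word \<delta> p' z = j}. axis p 1 $ p') = (if s = j then 1 else (0::real))"
        by (simp add: axis_def sum.If_cases[symmetric] if_distrib cong: if_cong)
          (auto simp: p)
      then show "(axis p 1 v* word_matrix \<delta> z) $ j = axis s 1 $ j"
        by (simp add: vm_component axis_def)
    qed
    let ?L = "\<lambda>y::real^'q. y v* word_matrix \<delta> z"
    let ?X = "{\<alpha> v* word_matrix \<delta> w | w. w \<in> W}"
    have "axis p 1 \<in> span ?X" using W by simp
    then have "?L (axis p 1) \<in> ?L ` span ?X" by blast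
    also have "\<dots> = span (?L ` ?X)" by (rule span_linear_image[OF linear_vm, symmetric])
    also have "\<dots> \<subseteq> span {c}" by (rule span_mono) (auto simp: const)
    finally have "axis s 1 \<in> span {c}" using e by simp
    then show ?thesis by (auto simp: span_singleton scalar_mult_eq_scaleR)
  qed
  have "card S \<le> 1"
  proof (rule ccontr)
    assume "\<not> card S \<le> 1"
    then obtain s s' where ss: "s \<in> S" "s' \<in> S" "s \<noteq> s'"
      using card_le_Suc0_iff_eq[of S] by auto
    obtain k where k: "axis s 1 = k *\<^sub>R c" using inspan ss(1) by blast
    have "1 = k * m" using arg_cong[OF k, of "\<lambda>x. x $ s"] cS[OF ss(1)] by (simp add: axis_def)
    moreover have "0 = k * m" using arg_cong[OF k, of "\<lambda>x. x $ s'"] cS[OF ss(2)] ss(3) by (simp add: axis_def)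
    ultimately show False by simp
  qed
  moreover have "S \<noteq> {}" unfolding S_def by simp
  ultimately have "card S = 1" by (simp add: card_gt_0_iff le_antisym Suc_leI)
  then show "synchronizing \<delta>" unfolding synchronizing_def S_def by blast
qed

end
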